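(* Let $P$ be a tree poset and $q$ a positive integer. Then $$M^*(n,q,P)\le\sum_{\mathrm{r}}\prod_{xy\in H(P)}n^{|\mathrm{r}(x)-\mathrm{r}(y)|}\cdot\binom{n}{\lfloor n/2\rfloor},$$ where the sum ranges over all poset homomorphisms $\mathrm{r}:P\to[q]$.
   Context: $\mathcal{B}_n$ is the family of subsets of $[n]$. A tree poset is a finite poset whose Hasse diagram is a tree. $M^*(n,q,P)$ is the number of induced copies of $P$ (injective maps $f$ into the family with $f(x)\subsetneq f(y)$ iff $x<_P y$) in the $q$ middle levels of $\mathcal{B}_n$, i.e. the $q$ consecutive layers $\{F:|F|=j\}$ closest to $n/2$. $H(P)$ is the directed Hasse diagram of $P$ (edge $xy$ when $y$ covers $x$). $[q]$ carries the reverse of the natural order, so a poset homomorphism $\mathrm{r}:P\to[q]$ satisfies $x<_P y\Rightarrow\mathrm{r}(x)>\mathrm{r}(y)$. *)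

theory Defs
  imports Main
begin

text \<open>A finite poset P is represented by a finite type 'a with its order.
  Cover relation (edges of the directed Hasse diagram H(P)): y covers x.\<close>

definition covers :: "'a::order \<Rightarrow> 'a \<Rightarrow> bool" where
  "covers x y \<longleftrightarrow> x < y \<and> \<not> (\<exists>z. x < z \<and> z < y)"

definition hasse :: "('a::order \<times> 'a) set" where
  "hasse = {(x, y). covers x y}"

definition hasse_adj :: "'a::order \<Rightarrow> 'a \<Rightarrow> bool" where
  "hasse_adj x y \<longleftrightarrow> covers x y \<or> covers y x"

definition hasse_connected :: "'a::order itself \<Rightarrow> bool" where
  "hasse_connected _ \<longleftrightarrow> (\<forall>x y::'a. (x, y) \<in> {(u, v). hasse_adj u v}\<^sup>*)"

definition hasse_acyclic :: "'a::order itself \<Rightarrow> bool" where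
  "hasse_acyclic _ \<longleftrightarrow> \<not> (\<exists>vs::'a list. length vs \<ge> 3 \<and> distinct vs \<and>
       (\<forall>i < length vs - 1. hasse_adj (vs ! i) (vs ! Suc i)) \<and>
       hasse_adj (last vs) (hd vs))"

definition tree_poset :: "'a::{order,finite} itself \<Rightarrow> bool" where
  "tree_poset T \<longleftrightarrow> hasse_connected T \<and> hasse_acyclic T"

text \<open>Indices of the q middle layers of B_n (sizes j with lo \<le> j < lo + q, j \<le> n).\<close>
definition middle_levels :: "nat \<Rightarrow> nat \<Rightarrow> nat set" where
  "middle_levels n q = {j. (n + 1 - q) div 2 \<le> j \<and> j < (n + 1 - q) div 2 + q \<and> j \<le> n}"

definition middle_family :: "nat \<Rightarrow> nat \<Rightarrow> nat set set" where
  "middle_family n q = {F. F \<subseteq> {1..n} \<and> card F \<in> middle_levels n q}"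

definition induced_copies :: "nat \<Rightarrow> nat \<Rightarrow> 'a::{order,finite} itself \<Rightarrow> ('a \<Rightarrow> nat set) set" where
  "induced_copies n q _ = {f. inj f \<and> (\<forall>x. f x \<in> middle_family n q) \<and>
                              (\<forall>x y. f x \<subset> f y \<longleftrightarrow> x < y)}"

definition Mstar :: "nat \<Rightarrow> nat \<Rightarrow> 'a::{order,finite} itself \<Rightarrow> nat" where
  "Mstar n q T = card (induced_copies n q T)"

text \<open>Poset homomorphisms P \<rightarrow> [q], with [q] = {1..q} carrying the reverse order.\<close>
definition homs_to_chain :: "nat \<Rightarrow> ('a::{order,finite} \<Rightarrow> nat) set" where
  "homs_to_chain q = {r. (\<forall>x. r x \<in> {1..q}) \<and> (\<forall>x y. x < y \<longrightarrow> r x > r y)}"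

end

theory Submission
  imports Defs "HOL-Library.FuncSet" "HOL.Binomial_Plus"
begin

lemma choose_le_pow: "n choose d \<le> n ^ d"
  by (cases "d \<le> n") (auto simp: binomial_le_pow binomial_eq_0)

lemma card_subsets_d: "card {D. D \<subseteq> {1..n} \<and> card D = d} \<le> n ^ d"
  using n_subsets[of "{1..n}" d] choose_le_pow[of n d] by simp

lemma count_up:
  assumes "F \<subseteq> {1..(n::nat)}"
  shows "card {G. G \<subseteq> {1..n} \<and> F \<subseteq> G \<and> card G = card F + d} \<le> n ^ d"
proof -
  let ?A = "{G. G \<subseteq> {1..n} \<and> F \<subseteq> G \<and> card G = card F + d}"
  have fF: "finite F" using assms finite_subset by blast
  have inj: "inj_on (\<lambda>G. G - F) ?A"
    by (rule inj_onI) blast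
  have sub: "(\<lambda>G. G - F) ` ?A \<subseteq> {D. D \<subseteq> {1..n} \<and> card D = d}"
  proof
    fix D assume "D \<in> (\<lambda>G. G - F) ` ?A"
    then obtain G where G: "G \<in> ?A" "D = G - F" by blast
    then have "card D = card G - card F" using card_Diff_subset[OF fF] by auto
    then show "D \<in> {D. D \<subseteq> {1..n} \<and> card D = d}" using G by auto
  qed
  have "card ?A = card ((\<lambda>G. G - F) ` ?A)" using card_image[OF inj] by simp
  also have "\<dots> \<le> card {D. D \<subseteq> {1..n} \<and> card D = d}"
    by (rule card_mono[OF _ sub]) simp
  also have "\<dots> \<le> n ^ d" by (rule card_subsets_d)
  finally show ?thesis .
qed

lemma count_down:
  assumes "F \<subseteq> {1..(n::nat)}"
  shows "card {G. G \<subseteq> F \<and> card G + d = card F} \<le> n ^ d"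
proof -
  let ?A = "{G. G \<subseteq> F \<and> card G + d = card F}"
  have fF: "finite F" using assms finite_subset by blast
  have inj: "inj_on (\<lambda>G. F - G) ?A"
    by (rule inj_onI) blast
  have sub: "(\<lambda>G. F - G) ` ?A \<subseteq> {D. D \<subseteq> {1..n} \<and> card D = d}"
  proof
    fix D assume "D \<in> (\<lambda>G. F - G) ` ?A"
    then obtain G where G: "G \<in> ?A" "D = F - G" by blast
    then have "card D = card F - card G" using card_Diff_subset[of G F] fF finite_subset by auto
    then show "D \<in> {D. D \<subseteq> {1..n} \<and> card D = d}" using G assms by auto
  qed
  have "card ?A = card ((\<lambda>G. F - G) ` ?A)" using card_image[OF inj] by simp
  also have "\<dots> \<le> card {D. D \<subseteq> {1..n} \<and> card D = d}"
    by (rule card_mono[OF _ sub]) simp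
  also have "\<dots> \<le> n ^ d" by (rule card_subsets_d)
  finally show ?thesis .
qed

lemma crossing_edge:
  assumes "(v, z) \<in> R\<^sup>*" "v \<in> S"
  shows "z \<in> S \<or> (\<exists>a b. a \<in> S \<and> b \<notin> S \<and> (a, b) \<in> R)"
  using assms by (induction rule: rtrancl_induct) auto

definition Lq :: "nat \<Rightarrow> nat \<Rightarrow> nat" where
  "Lq n q = (n + 1 - q) div 2 + q"

definition rk :: "nat \<Rightarrow> nat \<Rightarrow> ('a \<Rightarrow> nat set) \<Rightarrow> 'a \<Rightarrow> nat" where
  "rk n q f = (\<lambda>x. Lq n q - card (f x))"

definition Cr :: "nat \<Rightarrow> nat \<Rightarrow> 'a::{order,finite} itself \<Rightarrow> ('a \<Rightarrow> nat) \<Rightarrow> ('a \<Rightarrow> nat set) set" where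
  "Cr n q T r = {f \<in> induced_copies n q T. rk n q f = r}"

definition restr :: "'a set \<Rightarrow> ('a \<Rightarrow> nat set) \<Rightarrow> 'a \<Rightarrow> nat set" where
  "restr S f = (\<lambda>x. if x \<in> S then f x else {})"

definition wt :: "nat \<Rightarrow> ('a \<Rightarrow> nat) \<Rightarrow> 'a \<times> 'a \<Rightarrow> nat" where
  "wt n r = (\<lambda>(x, y). n ^ nat \<bar>int (r x) - int (r y)\<bar>)"

lemma copy_sub: "f \<in> induced_copies n q T \<Longrightarrow> f x \<subseteq> {1..n}"
  by (auto simp: induced_copies_def middle_family_def)

lemma copy_card: "f \<in> induced_copies n q T \<Longrightarrow> (n + 1 - q) div 2 \<le> card (f x) \<and> card (f x) < Lq n q"
  by (auto simp: induced_copies_def middle_family_def middle_levels_def Lq_def)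

lemma copy_less: "f \<in> induced_copies n q T \<Longrightarrow> x < y \<Longrightarrow> f x \<subset> f y"
  unfolding induced_copies_def by blast

lemma copy_fin: "f \<in> induced_copies n q T \<Longrightarrow> finite (f x)"
  using copy_sub[of f n q T x] finite_subset[of "f x" "{1..n}"] by simp

lemma fin_copies: "finite (induced_copies n q (T::'a::{order,finite} itself))"
proof -
  have "induced_copies n q T \<subseteq> PiE UNIV (\<lambda>_. Pow {1..n})"
  proof
    fix f assume "f \<in> induced_copies n q T"
    then have "\<And>x. f x \<in> Pow {1..n}" using copy_sub by blast
    then show "f \<in> PiE UNIV (\<lambda>_. Pow {1..n})" unfolding PiE_UNIV_domain by blast
  qed
  then show ?thesis by (rule finite_subset) (rule finite_PiE; simp)
qed

lemma fin_Cr[simp]: "finite (Cr n q T r)"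
  by (rule finite_subset[OF _ fin_copies]) (auto simp: Cr_def)

lemma Cr_card: "f \<in> Cr n q T r \<Longrightarrow> card (f x) = Lq n q - r x"
  using copy_card[of f n q T x] by (auto simp: Cr_def rk_def)

lemma Cr_less_card: "f \<in> Cr n q T r \<Longrightarrow> x < y \<Longrightarrow> card (f y) = card (f x) + nat \<bar>int (r x) - int (r y)\<bar>"
proof -
  assume f: "f \<in> Cr n q T r" and xy: "x < y"
  then have c: "f \<in> induced_copies n q T" by (simp add: Cr_def)
  have "card (f x) < card (f y)"
    using copy_less[OF c xy] copy_fin[OF c] by (simp add: psubset_card_mono)
  moreover have "card (f y) < Lq n q" using copy_card[OF c] by blast
  moreover have "r x = Lq n q - card (f x)" "r y = Lq n q - card (f y)"
    using f by (auto simp: Cr_def rk_def)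
  ultimately show ?thesis by linarith
qed

definition good :: "nat \<Rightarrow> nat \<Rightarrow> 'a::{order,finite} itself \<Rightarrow> ('a \<Rightarrow> nat) \<Rightarrow> 'a set \<Rightarrow> bool" where
  "good n q T r S \<longleftrightarrow> (\<exists>E. E \<subseteq> hasse \<and> E \<subseteq> S \<times> S \<and>
     card (restr S ` Cr n q T r) \<le> (n choose (n div 2)) * prod (wt n r) E)"

lemma good_base: "good n q T r {v}"
proof -
  let ?B = "{G. G \<subseteq> {1..n} \<and> card G = Lq n q - r v}"
  have "restr {v} ` Cr n q T r \<subseteq> (\<lambda>G. \<lambda>x. if x \<in> {v} then G else {}) ` ?B"
  proof
    fix h assume "h \<in> restr {v} ` Cr n q T r"
    then obtain f where f: "f \<in> Cr n q T r" "h = restr {v} f" by blast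
    have c: "f \<in> induced_copies n q T" using f(1) by (simp add: Cr_def)
    have "f v \<in> ?B" using Cr_card[OF f(1), of v] copy_sub[OF c, of v] by simp
    moreover have "h = (\<lambda>x. if x \<in> {v} then f v else {})" using f(2) by (auto simp: restr_def fun_eq_iff)
    ultimately show "h \<in> (\<lambda>G. \<lambda>x. if x \<in> {v} then G else {}) ` ?B" by blast
  qed
  then have "card (restr {v} ` Cr n q T r) \<le> card ((\<lambda>G. \<lambda>x. if x \<in> {v} then G else {}) ` ?B)"
    by (rule card_mono[rotated]) simp
  also have "\<dots> \<le> card ?B" by (rule card_image_le) simp
  also have "\<dots> = n choose (Lq n q - r v)" using n_subsets[of "{1..n}"] by simp
  also have "\<dots> \<le> n choose (n div 2)" by (rule binomial_maximum)
  finally show ?thesis unfolding good_def by (intro exI[of _ "{}"]) auto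
qed

lemma restr_insert: "y \<notin> S \<Longrightarrow> restr (insert y S) f = (restr S f)(y := f y)"
  by (auto simp: restr_def fun_eq_iff)

lemma restr_restr: "restr S (restr (insert y S) f) = restr S f"
  by (auto simp: restr_def fun_eq_iff)

lemma wt_sym: "wt n r (x, y) = wt n r (y, x)"
  by (simp add: wt_def abs_minus_commute)

lemma good_step:
  assumes g: "good n q T r S" and xS: "x \<in> S" and yS: "y \<notin> S" and adj: "hasse_adj x y"
  shows "good n q T r (insert y S)"
proof -
  obtain E where E: "E \<subseteq> hasse" "E \<subseteq> S \<times> S"
    and cE: "card (restr S ` Cr n q T r) \<le> (n choose (n div 2)) * prod (wt n r) E"
    using g unfolding good_def by blast
  define d where "d = nat \<bar>int (r x) - int (r y)\<bar>"
  define e where "e = (if covers x y then (x, y) else (y, x))"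
  have eh: "e \<in> hasse" using adj by (auto simp: e_def hasse_def hasse_adj_def)
  have we: "wt n r e = n ^ d" by (auto simp: e_def wt_def d_def abs_minus_commute)
  have enE: "e \<notin> E" using E(2) yS by (auto simp: e_def)
  let ?R = "restr S ` Cr n q T r"
  let ?R' = "restr (insert y S) ` Cr n q T r"
  define A where "A g = (if covers x y then {G. G \<subseteq> {1..n} \<and> g x \<subseteq> G \<and> card G = card (g x) + d}
                         else {G. G \<subseteq> g x \<and> card G + d = card (g x)})" for g :: "'a \<Rightarrow> nat set"
  have sub: "?R' \<subseteq> (\<Union>g\<in>?R. (\<lambda>G. g(y := G)) ` A g)"
  proof
    fix h assume "h \<in> ?R'"
    then obtain f where f: "f \<in> Cr n q T r" "h = restr (insert y S) f" by blast
    have c: "f \<in> induced_copies n q T" using f(1) by (simp add: Cr_def)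
    let ?g = "restr S f"
    have gx: "?g x = f x" using xS by (simp add: restr_def)
    have "f y \<in> A ?g"
    proof (cases "covers x y")
      case True
      then have xy: "x < y" by (simp add: covers_def)
      then show ?thesis using Cr_less_card[OF f(1) xy] copy_less[OF c xy] copy_sub[OF c, of y] True gx
        by (auto simp: A_def d_def)
    next
      case False
      then have "covers y x" using adj by (simp add: hasse_adj_def)
      then have yx: "y < x" by (simp add: covers_def)
      then show ?thesis using Cr_less_card[OF f(1) yx] copy_less[OF c yx] False gx
        by (auto simp: A_def d_def abs_minus_commute)
    qed
    moreover have "h = ?g(y := f y)" using f(2) restr_insert[OF yS] by simp
    ultimately show "h \<in> (\<Union>g\<in>?R. (\<lambda>G. g(y := G)) ` A g)" using f(1) by blast
  qed
  have fin: "finite ?R" by simp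
  have cA: "finite (A g) \<and> card (A g) \<le> n ^ d" if "g \<in> ?R" for g
  proof -
    obtain f where f: "f \<in> Cr n q T r" "g = restr S f" using \<open>g \<in> ?R\<close> by blast
    have c: "f \<in> induced_copies n q T" using f(1) by (simp add: Cr_def)
    have gx: "g x \<subseteq> {1..n}" using xS f(2) copy_sub[OF c, of x] by (simp add: restr_def)
    have "A g \<subseteq> Pow {1..n}" using gx by (auto simp: A_def)
    then have "finite (A g)" by (rule finite_subset) simp
    then show ?thesis using count_up[OF gx, of d] count_down[OF gx, of d] by (simp add: A_def)
  qed
  have "card ?R' \<le> card (\<Union>g\<in>?R. (\<lambda>G. g(y := G)) ` A g)"
  proof (rule card_mono[OF _ sub])
    show "finite (\<Union>g\<in>?R. (\<lambda>G. g(y := G)) ` A g)"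
    proof (rule finite_UN_I[OF fin])
      fix g assume "g \<in> ?R"
      then show "finite ((\<lambda>G. g(y := G)) ` A g)" using cA by blast
    qed
  qed
  also have "\<dots> \<le> (\<Sum>g\<in>?R. card ((\<lambda>G. g(y := G)) ` A g))" by (rule card_UN_le[OF fin])
  also have "\<dots> \<le> (\<Sum>g\<in>?R. n ^ d)"
  proof (rule sum_mono)
    fix g assume "g \<in> ?R"
    show "card ((\<lambda>G. g(y := G)) ` A g) \<le> n ^ d"
      using card_image_le[of "A g" "\<lambda>G. g(y := G)"] cA[OF \<open>g \<in> ?R\<close>] by linarith
  qed
  also have "\<dots> = card ?R * n ^ d" by simp
  also have "\<dots> \<le> (n choose (n div 2)) * prod (wt n r) E * n ^ d" using cE by (rule mult_right_mono) simp
  also have "\<dots> = (n choose (n div 2)) * prod (wt n r) (insert e E)"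
    using enE we finite_subset[OF E(1)] by (simp add: prod.insert_if)
  finally have "card ?R' \<le> (n choose (n div 2)) * prod (wt n r) (insert e E)" .
  moreover have "insert e E \<subseteq> hasse" using eh E(1) by simp
  moreover have "insert e E \<subseteq> insert y S \<times> insert y S" using E(2) xS by (auto simp: e_def)
  ultimately show ?thesis unfolding good_def by blast
qed

lemma good_univ:
  assumes conn: "hasse_connected (TYPE('a::{order,finite}))"
  shows "good n q (TYPE('a)) r (UNIV :: 'a set)"
proof -
  fix v :: 'a
  have main: "\<And>S. v \<in> S \<Longrightarrow> good n q (TYPE('a)) r S \<Longrightarrow> good n q (TYPE('a)) r (UNIV :: 'a set)"
  proof -
    fix S :: "'a set"
    show "v \<in> S \<Longrightarrow> good n q (TYPE('a)) r S \<Longrightarrow> good n q (TYPE('a)) r UNIV"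
    proof (induction "card (UNIV - S)" arbitrary: S rule: less_induct)
      case (less S)
      show ?case
      proof (cases "S = UNIV")
        case True then show ?thesis using less.prems by simp
      next
        case False
        then obtain z where z: "z \<notin> S" by blast
        have "(v, z) \<in> {(u, w). hasse_adj u w}\<^sup>*" using conn by (simp add: hasse_connected_def)
        from crossing_edge[OF this less.prems(1)] z obtain a b where
          ab: "a \<in> S" "b \<notin> S" "hasse_adj a b" by blast
        have g': "good n q (TYPE('a)) r (insert b S)" by (rule good_step[OF less.prems(2) ab])
        have "card (UNIV - insert b S) < card (UNIV - S)"
          using ab(2) by (intro psubset_card_mono) auto
        then show ?thesis using less.hyps[OF _ _ g'] less.prems(1) by blast
      qed
    qed
  qed
  show ?thesis by (rule main[of "{v}"]) (auto intro: good_base)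
qed

lemma Cr_bound:
  assumes conn: "hasse_connected (TYPE('a::{order,finite}))" and n: "n \<ge> 1 \<or> (hasse :: ('a \<times> 'a) set) = {}"
  shows "card (Cr n q (TYPE('a)) r) \<le> (n choose (n div 2)) * prod (wt n r) (hasse :: ('a \<times> 'a) set)"
proof -
  obtain E where E: "E \<subseteq> (hasse :: ('a \<times> 'a) set)"
    and cE: "card (restr UNIV ` Cr n q (TYPE('a)) r) \<le> (n choose (n div 2)) * prod (wt n r) E"
    using good_univ[OF conn, of n q r] unfolding good_def by blast
  have ru: "restr UNIV ` Cr n q (TYPE('a)) r = Cr n q (TYPE('a)) r"
  proof -
    have "restr (UNIV :: 'a set) = (\<lambda>f. f)" by (auto simp: restr_def fun_eq_iff)
    then show ?thesis by (simp add: image_ident)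
  qed
  have fh: "finite (hasse :: ('a \<times> 'a) set)" by simp
  have "prod (wt n r) E \<le> prod (wt n r) hasse"
  proof (cases "n \<ge> 1")
    case True
    have "prod (wt n r) hasse = prod (wt n r) (hasse - E) * prod (wt n r) E"
      using prod.subset_diff[OF E fh] by simp
    moreover have "1 \<le> prod (wt n r) (hasse - E)"
      by (rule prod_ge_1) (use True in \<open>auto simp: wt_def\<close>)
    ultimately show ?thesis by simp
  next
    case False
    then have "(hasse :: ('a \<times> 'a) set) = {}" using n by simp
    then show ?thesis using E by simp
  qed
  then show ?thesis using cE ru by (metis le_trans mult_le_mono2)
qed

lemma fin_homs: "finite (homs_to_chain q :: ('a::{order,finite} \<Rightarrow> nat) set)"
proof -
  have "(homs_to_chain q :: ('a \<Rightarrow> nat) set) \<subseteq> PiE UNIV (\<lambda>_. {1..q})"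
    unfolding PiE_UNIV_domain Pi_iff homs_to_chain_def by blast
  then show ?thesis by (rule finite_subset) (rule finite_PiE; simp)
qed

lemma copies_cover:
  "induced_copies n q (TYPE('a::{order,finite})) \<subseteq> (\<Union>r\<in>homs_to_chain q. Cr n q (TYPE('a)) r)"
proof
  fix f assume c: "f \<in> induced_copies n q (TYPE('a))"
  have "rk n q f \<in> homs_to_chain q"
    unfolding homs_to_chain_def
  proof (intro CollectI conjI allI impI)
    fix x
    show "rk n q f x \<in> {1..q}" using copy_card[OF c, of x] by (auto simp: rk_def Lq_def)
  next
    fix x y :: 'a assume xy: "x < y"
    have "card (f x) < card (f y)"
      using copy_less[OF c xy] copy_fin[OF c] by (simp add: psubset_card_mono)
    then show "rk n q f x > rk n q f y" using copy_card[OF c, of y] by (auto simp: rk_def)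
  qed
  moreover have "f \<in> Cr n q (TYPE('a)) (rk n q f)" using c by (simp add: Cr_def)
  ultimately show "f \<in> (\<Union>r\<in>homs_to_chain q. Cr n q (TYPE('a)) r)" by blast
qed

theorem lemma5p4:
  fixes T :: "'a::{order,finite} itself" and n q :: nat
  assumes "tree_poset T" and "q > 0"
  shows "Mstar n q T \<le>
    (\<Sum>r\<in>homs_to_chain q. \<Prod>(x, y)\<in>(hasse :: ('a \<times> 'a) set). n ^ nat \<bar>int (r x) - int (r y)\<bar>)
      * (n choose (n div 2))"
proof -
  have TT: "induced_copies n q T = induced_copies n q (TYPE('a))" by (simp add: induced_copies_def)
  have conn: "hasse_connected (TYPE('a))" using assms(1) by (simp add: tree_poset_def hasse_connected_def)
  show ?thesis
  proof (cases "n = 0 \<and> (hasse :: ('a \<times> 'a) set) \<noteq> {}")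
    case True
    then obtain a b :: 'a where ab: "a < b" "n = 0" by (auto simp: hasse_def covers_def)
    have "induced_copies n q T = {}"
    proof (rule ccontr)
      assume "induced_copies n q T \<noteq> {}"
      then obtain f where c: "f \<in> induced_copies n q T" by blast
      have "f a \<subset> f b" by (rule copy_less[OF c ab(1)])
      moreover have "f b \<subseteq> {1..n}" by (rule copy_sub[OF c])
      ultimately show False using ab(2) by auto
    qed
    then show ?thesis by (simp add: Mstar_def)
  next
    case False
    then have n: "n \<ge> 1 \<or> (hasse :: ('a \<times> 'a) set) = {}" by auto
    have "Mstar n q T = card (induced_copies n q (TYPE('a)))" by (simp add: Mstar_def TT)
    also have "\<dots> \<le> card (\<Union>r\<in>homs_to_chain q. Cr n q (TYPE('a)) r)"
      by (rule card_mono[OF _ copies_cover]) (simp add: fin_homs)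
    also have "\<dots> \<le> (\<Sum>r\<in>homs_to_chain q. card (Cr n q (TYPE('a)) r))"
      by (rule card_UN_le[OF fin_homs])
    also have "\<dots> \<le> (\<Sum>r\<in>homs_to_chain q. (n choose (n div 2)) * prod (wt n r) (hasse :: ('a \<times> 'a) set))"
      by (rule sum_mono) (rule Cr_bound[OF conn n])
    also have "\<dots> = (\<Sum>r\<in>homs_to_chain q. prod (wt n r) (hasse :: ('a \<times> 'a) set)) * (n choose (n div 2))"
      by (subst sum_distrib_right) (simp add: mult.commute)
    finally show ?thesis by (simp add: wt_def)
  qed
qed

end
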